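(* Let $C$ be a set and $\mathsf{D}$ a category. (i) Suppose given an object $F_{\mathrm{nil}}\in\mathsf{D}$, for every $c\in C$ an endofunctor $\gamma_c:\mathsf{D}\to\mathsf{D}$, and for all $a,b\in C$ a natural isomorphism $\tau_{a,b}:\gamma_a\gamma_b\xrightarrow{\sim}\gamma_b\gamma_a$, such that $\tau_{a,b}\tau_{b,a}=\mathrm{Id}$ for all $a,b$, and such that for all $a,b,c\in C$ the two composites $\gamma_a\gamma_b\gamma_c\to\gamma_c\gamma_b\gamma_a$ given by $(\tau_{b,c}\cdot\gamma_a)\circ(\gamma_b\cdot\tau_{a,c})\circ(\tau_{a,b}\cdot\gamma_c)$ and $(\gamma_c\cdot\tau_{a,b})\circ(\tau_{a,c}\cdot\gamma_b)\circ(\gamma_a\cdot\tau_{b,c})$ are equal. Then there is a functor $F:\mathrm{SList}(C)\to\mathsf{D}$ equipped with isomorphisms $\upsilon_{\mathrm{nil}}:F([\,])\simeq F_{\mathrm{nil}}$ and, for each $c\in C$, natural isomorphisms $\upsilon_{\mathrm{cons},c}:F\circ(c::-)\simeq\gamma_c\circ F$, such that $F(\mathrm{sw}_{a,b,l})$ is identified with $(\tau_{a,b})_{F(l)}$ through these isomorphisms. (ii) Let $F,G:\mathrm{SList}(C)\to\mathsf{D}$ be functors. Suppose given a morphism $\phi_{\mathrm{nil}}:F([\,])\to G([\,])$ and, for every $c\in C$, $l\in\mathrm{SList}(C)$ and morphism $\mathrm{ind}:F(l)\to G(l)$, a morphism $\phi_{c,l}(\mathrm{ind}):F(c::l)\to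 G(c::l)$, such that: for all $a,b\in C$, $l$, and $\mathrm{ind}:F(l)\to G(l)$, one has $G(\mathrm{sw}_{a,b,l})\circ\phi_{a,b::l}(\phi_{b,l}(\mathrm{ind}))=\phi_{b,a::l}(\phi_{a,l}(\mathrm{ind}))\circ F(\mathrm{sw}_{a,b,l})$; and for all $c\in C$, morphisms $f:l\to l'$ in $\mathrm{SList}(C)$ and morphisms $\mathrm{ind}_l:F(l)\to G(l)$, $\mathrm{ind}_{l'}:F(l')\to G(l')$ with $\mathrm{ind}_{l'}\circ F(f)=G(f)\circ\mathrm{ind}_l$, one has $\phi_{c,l'}(\mathrm{ind}_{l'})\circ F(c::_mf)=G(c::_mf)\circ\phi_{c,l}(\mathrm{ind}_l)$. Then there is a unique natural transformation $\phi:F\to G$ such that $\phi_{[\,]}=\phi_{\mathrm{nil}}$ and $\phi_{c::l}=\phi_{c,l}(\phi_l)$ for all $c,l$.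
   Context: For a set $C$, the category of symmetric lists $\mathrm{SList}(C)$ is the category presented by generators and relations as follows. Objects are finite lists of elements of $C$ (with $[\,]$ the empty list and $c::l$ the list with head $c$ and tail $l$). Morphisms are generated by: for all $a,b\in C$ and lists $l$, a morphism $\mathrm{sw}_{a,b,l}:a::b::l\to b::a::l$; and for every morphism $f:l\to l'$ and $x\in C$, a morphism $x::_mf:x::l\to x::l'$. Relations: $f\mapsto x::_mf$ respects composition and identities (so $x::-$ is a functor); $\mathrm{sw}_{a,b,l}$ is natural in $l$; $\mathrm{sw}_{b,a,l}\circ\mathrm{sw}_{a,b,l}=\mathrm{Id}_{a::b::l}$; and for all $a,b,c,l$, $\mathrm{sw}_{b,c,a::l}\circ(b::_m\mathrm{sw}_{a,c,l})\circ\mathrm{sw}_{a,b,c::l}=(c::_m\mathrm{sw}_{a,b,l})\circ\mathrm{sw}_{a,c,b::l}\circ(a::_m\mathrm{sw}_{b,c,l})$. In (i), $\gamma_b\cdot\tau$ and $\tau\cdot\gamma_c$ denote whiskerings. *)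

theory Defs
  imports Main
begin

record ('o, 'm) category =
  Ob :: "'o set"
  Mor :: "'m set"
  Dom :: "'m \<Rightarrow> 'o"
  Cod :: "'m \<Rightarrow> 'o"
  Comp :: "'m \<Rightarrow> 'm \<Rightarrow> 'm"   (* Comp g f = g o f *)
  Ident :: "'o \<Rightarrow> 'm"

definition hom :: "('o, 'm) category \<Rightarrow> 'o \<Rightarrow> 'o \<Rightarrow> 'm set" where
  "hom D a b = {f \<in> Mor D. Dom D f = a \<and> Cod D f = b}"

definition is_category :: "('o, 'm) category \<Rightarrow> bool" where
  "is_category D \<longleftrightarrow>
     (\<forall>a\<in>Ob D. Ident D a \<in> hom D a a) \<and>
     (\<forall>f\<in>Mor D. Dom D f \<in> Ob D \<and> Cod D f \<in> Ob D) \<and>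
     (\<forall>f\<in>Mor D. \<forall>g\<in>Mor D. Cod D f = Dom D g \<longrightarrow>
         Comp D g f \<in> hom D (Dom D f) (Cod D g)) \<and>
     (\<forall>f\<in>Mor D. Comp D (Ident D (Cod D f)) f = f \<and> Comp D f (Ident D (Dom D f)) = f) \<and>
     (\<forall>f\<in>Mor D. \<forall>g\<in>Mor D. \<forall>h\<in>Mor D. Cod D f = Dom D g \<longrightarrow> Cod D g = Dom D h \<longrightarrow>
         Comp D h (Comp D g f) = Comp D (Comp D h g) f)"

definition is_iso :: "('o, 'm) category \<Rightarrow> 'm \<Rightarrow> bool" where
  "is_iso D f \<longleftrightarrow> f \<in> Mor D \<and>
     (\<exists>g \<in> hom D (Cod D f) (Dom D f).
        Comp D g f = Ident D (Dom D f) \<and> Comp D f g = Ident D (Cod D f))"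

definition is_endofunctor :: "('o, 'm) category \<Rightarrow> ('o \<Rightarrow> 'o) \<Rightarrow> ('m \<Rightarrow> 'm) \<Rightarrow> bool" where
  "is_endofunctor D Go Gm \<longleftrightarrow>
     (\<forall>a\<in>Ob D. Go a \<in> Ob D) \<and>
     (\<forall>f\<in>Mor D. Gm f \<in> hom D (Go (Dom D f)) (Go (Cod D f))) \<and>
     (\<forall>a\<in>Ob D. Gm (Ident D a) = Ident D (Go a)) \<and>
     (\<forall>f\<in>Mor D. \<forall>g\<in>Mor D. Cod D f = Dom D g \<longrightarrow> Gm (Comp D g f) = Comp D (Gm g) (Gm f))"

definition is_nat_iso_endo ::
  "('o, 'm) category \<Rightarrow> ('o \<Rightarrow> 'o) \<Rightarrow> ('m \<Rightarrow> 'm) \<Rightarrow> ('o \<Rightarrow> 'o) \<Rightarrow> ('m \<Rightarrow> 'm) \<Rightarrow> ('o \<Rightarrow> 'm) \<Rightarrow> bool" where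
  "is_nat_iso_endo D Fo Fm Go Gm \<eta> \<longleftrightarrow>
     (\<forall>X\<in>Ob D. \<eta> X \<in> hom D (Fo X) (Go X) \<and> is_iso D (\<eta> X)) \<and>
     (\<forall>f\<in>Mor D. Comp D (\<eta> (Cod D f)) (Fm f) = Comp D (Gm f) (\<eta> (Dom D f)))"

text \<open>Formal morphism expressions: identities, swaps sw_{a,b,l}, x ::_m f,
  and composition (MComp g f = g o f).\<close>
datatype 'c mterm =
    MId "'c list"
  | MSw 'c 'c "'c list"
  | MCons 'c "'c mterm"
  | MComp "'c mterm" "'c mterm"

inductive mwt :: "'c set \<Rightarrow> 'c mterm \<Rightarrow> 'c list \<Rightarrow> 'c list \<Rightarrow> bool" for C where
  wt_id: "set l \<subseteq> C \<Longrightarrow> mwt C (MId l) l l"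
| wt_sw: "a \<in> C \<Longrightarrow> b \<in> C \<Longrightarrow> set l \<subseteq> C \<Longrightarrow> mwt C (MSw a b l) (a # b # l) (b # a # l)"
| wt_cons: "x \<in> C \<Longrightarrow> mwt C f l l' \<Longrightarrow> mwt C (MCons x f) (x # l) (x # l')"
| wt_comp: "mwt C f l1 l2 \<Longrightarrow> mwt C g l2 l3 \<Longrightarrow> mwt C (MComp g f) l1 l3"

inductive meq :: "'c set \<Rightarrow> 'c mterm \<Rightarrow> 'c mterm \<Rightarrow> bool" for C where
  eq_refl: "mwt C f l l' \<Longrightarrow> meq C f f"
| eq_sym: "meq C f g \<Longrightarrow> meq C g f"
| eq_trans: "meq C f g \<Longrightarrow> meq C g h \<Longrightarrow> meq C f h"
| eq_comp: "meq C f f' \<Longrightarrow> meq C g g' \<Longrightarrow> mwt C f l1 l2 \<Longrightarrow> mwt C g l2 l3 \<Longrightarrow>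
    meq C (MComp g f) (MComp g' f')"
| eq_cons: "x \<in> C \<Longrightarrow> meq C f f' \<Longrightarrow> meq C (MCons x f) (MCons x f')"
| eq_idl: "mwt C f l l' \<Longrightarrow> meq C (MComp (MId l') f) f"
| eq_idr: "mwt C f l l' \<Longrightarrow> meq C (MComp f (MId l)) f"
| eq_assoc: "mwt C f l1 l2 \<Longrightarrow> mwt C g l2 l3 \<Longrightarrow> mwt C h l3 l4 \<Longrightarrow>
    meq C (MComp h (MComp g f)) (MComp (MComp h g) f)"
| eq_cons_id: "x \<in> C \<Longrightarrow> set l \<subseteq> C \<Longrightarrow> meq C (MCons x (MId l)) (MId (x # l))"
| eq_cons_comp: "x \<in> C \<Longrightarrow> mwt C f l1 l2 \<Longrightarrow> mwt C g l2 l3 \<Longrightarrow>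
    meq C (MCons x (MComp g f)) (MComp (MCons x g) (MCons x f))"
| eq_sw_nat: "a \<in> C \<Longrightarrow> b \<in> C \<Longrightarrow> mwt C f l l' \<Longrightarrow>
    meq C (MComp (MSw a b l') (MCons a (MCons b f))) (MComp (MCons b (MCons a f)) (MSw a b l))"
| eq_sw_inv: "a \<in> C \<Longrightarrow> b \<in> C \<Longrightarrow> set l \<subseteq> C \<Longrightarrow>
    meq C (MComp (MSw b a l) (MSw a b l)) (MId (a # b # l))"
| eq_ybe: "a \<in> C \<Longrightarrow> b \<in> C \<Longrightarrow> c \<in> C \<Longrightarrow> set l \<subseteq> C \<Longrightarrow>
    meq C (MComp (MSw b c (a # l)) (MComp (MCons b (MSw a c l)) (MSw a b (c # l))))
          (MComp (MCons c (MSw a b l)) (MComp (MSw a c (b # l)) (MCons a (MSw b c l))))"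

text \<open>A functor SList(C) -> D: object map on lists over C, and a map on morphism
  expressions that is invariant under the congruence (hence a map on the
  morphisms of the presented category) and preserves identities and composition.\<close>
definition is_slist_functor ::
  "'c set \<Rightarrow> ('o, 'm) category \<Rightarrow> ('c list \<Rightarrow> 'o) \<Rightarrow> ('c mterm \<Rightarrow> 'm) \<Rightarrow> bool" where
  "is_slist_functor C D Fo Fm \<longleftrightarrow>
     (\<forall>l. set l \<subseteq> C \<longrightarrow> Fo l \<in> Ob D) \<and>
     (\<forall>f l l'. mwt C f l l' \<longrightarrow> Fm f \<in> hom D (Fo l) (Fo l')) \<and>
     (\<forall>f g. meq C f g \<longrightarrow> Fm f = Fm g) \<and>
     (\<forall>l. set l \<subseteq> C \<longrightarrow> Fm (MId l) = Ident D (Fo l)) \<and>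
     (\<forall>f g l1 l2 l3. mwt C f l1 l2 \<longrightarrow> mwt C g l2 l3 \<longrightarrow>
        Fm (MComp g f) = Comp D (Fm g) (Fm f))"

definition is_slist_nat_trans ::
  "'c set \<Rightarrow> ('o, 'm) category \<Rightarrow> ('c list \<Rightarrow> 'o) \<Rightarrow> ('c mterm \<Rightarrow> 'm) \<Rightarrow>
   ('c list \<Rightarrow> 'o) \<Rightarrow> ('c mterm \<Rightarrow> 'm) \<Rightarrow> ('c list \<Rightarrow> 'm) \<Rightarrow> bool" where
  "is_slist_nat_trans C D Fo Fm Go Gm \<phi> \<longleftrightarrow>
     (\<forall>l. set l \<subseteq> C \<longrightarrow> \<phi> l \<in> hom D (Fo l) (Go l)) \<and>
     (\<forall>f l l'. mwt C f l l' \<longrightarrow> Comp D (\<phi> l') (Fm f) = Comp D (Gm f) (\<phi> l))"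

end

theory Submission
  imports Defs
begin

lemma cat_ident: "is_category D \<Longrightarrow> a \<in> Ob D \<Longrightarrow> Ident D a \<in> hom D a a"
  by (simp add: is_category_def)
lemma hom_ob: "is_category D \<Longrightarrow> f \<in> hom D a b \<Longrightarrow> a \<in> Ob D \<and> b \<in> Ob D"
  by (auto simp: is_category_def hom_def)
lemma cat_comp: "is_category D \<Longrightarrow> f \<in> hom D a b \<Longrightarrow> g \<in> hom D b c \<Longrightarrow> Comp D g f \<in> hom D a c"
  by (auto simp: is_category_def hom_def)
lemma cat_idl: "is_category D \<Longrightarrow> f \<in> hom D a b \<Longrightarrow> Comp D (Ident D b) f = f"
  by (auto simp: is_category_def hom_def)
lemma cat_idr: "is_category D \<Longrightarrow> f \<in> hom D a b \<Longrightarrow> Comp D f (Ident D a) = f"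
  by (auto simp: is_category_def hom_def)
lemma cat_assoc: "is_category D \<Longrightarrow> f \<in> hom D a b \<Longrightarrow> g \<in> hom D b c \<Longrightarrow> h \<in> hom D c d \<Longrightarrow>
   Comp D h (Comp D g f) = Comp D (Comp D h g) f"
  by (auto simp: is_category_def hom_def)
lemma ident_iso: "is_category D \<Longrightarrow> a \<in> Ob D \<Longrightarrow> is_iso D (Ident D a)"
  unfolding is_iso_def
  apply (frule (1) cat_ident)
  apply (rule conjI, simp add: hom_def)
  apply (rule bexI[where x="Ident D a"])
   apply (auto simp: hom_def dest: cat_idl)
  done

lemma ef_ob: "is_endofunctor D Go Gm \<Longrightarrow> a \<in> Ob D \<Longrightarrow> Go a \<in> Ob D"
  by (simp add: is_endofunctor_def)
lemma ef_hom: "is_endofunctor D Go Gm \<Longrightarrow> f \<in> hom D a b \<Longrightarrow> Gm f \<in> hom D (Go a) (Go b)"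
  by (auto simp: is_endofunctor_def hom_def)
lemma ef_id: "is_endofunctor D Go Gm \<Longrightarrow> a \<in> Ob D \<Longrightarrow> Gm (Ident D a) = Ident D (Go a)"
  by (simp add: is_endofunctor_def)
lemma ef_comp: "is_endofunctor D Go Gm \<Longrightarrow> f \<in> hom D a b \<Longrightarrow> g \<in> hom D b c \<Longrightarrow>
   Gm (Comp D g f) = Comp D (Gm g) (Gm f)"
  by (auto simp: is_endofunctor_def hom_def)

lemma mwt_set: "mwt C f l l' \<Longrightarrow> set l \<subseteq> C \<and> set l' \<subseteq> C"
  by (induction rule: mwt.induct) auto

fun FoS :: "'o \<Rightarrow> ('c \<Rightarrow> 'o \<Rightarrow> 'o) \<Rightarrow> 'c list \<Rightarrow> 'o" where
  "FoS Fnil \<gamma>o [] = Fnil"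
| "FoS Fnil \<gamma>o (c # l) = \<gamma>o c (FoS Fnil \<gamma>o l)"

fun FmS :: "('o, 'm) category \<Rightarrow> 'o \<Rightarrow> ('c \<Rightarrow> 'o \<Rightarrow> 'o) \<Rightarrow> ('c \<Rightarrow> 'm \<Rightarrow> 'm) \<Rightarrow>
   ('c \<Rightarrow> 'c \<Rightarrow> 'o \<Rightarrow> 'm) \<Rightarrow> 'c mterm \<Rightarrow> 'm" where
  "FmS D Fnil \<gamma>o \<gamma>m \<tau> (MId l) = Ident D (FoS Fnil \<gamma>o l)"
| "FmS D Fnil \<gamma>o \<gamma>m \<tau> (MSw a b l) = \<tau> a b (FoS Fnil \<gamma>o l)"
| "FmS D Fnil \<gamma>o \<gamma>m \<tau> (MCons x f) = \<gamma>m x (FmS D Fnil \<gamma>o \<gamma>m \<tau> f)"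
| "FmS D Fnil \<gamma>o \<gamma>m \<tau> (MComp g f) = Comp D (FmS D Fnil \<gamma>o \<gamma>m \<tau> g) (FmS D Fnil \<gamma>o \<gamma>m \<tau> f)"

context
  fixes C :: "'c set" and D :: "('o, 'm) category" and Fnil \<gamma>o \<gamma>m \<tau>
  assumes cat: "is_category D" and fnil: "Fnil \<in> Ob D"
  and endo: "\<forall>c\<in>C. is_endofunctor D (\<gamma>o c) (\<gamma>m c)"
  and nat: "\<forall>a\<in>C. \<forall>b\<in>C. is_nat_iso_endo D (\<gamma>o a \<circ> \<gamma>o b) (\<gamma>m a \<circ> \<gamma>m b)
                                     (\<gamma>o b \<circ> \<gamma>o a) (\<gamma>m b \<circ> \<gamma>m a) (\<tau> a b)"
  and inv: "\<forall>a\<in>C. \<forall>b\<in>C. \<forall>X\<in>Ob D. Comp D (\<tau> a b X) (\<tau> b a X) = Ident D (\<gamma>o b (\<gamma>o a X))"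
  and ybe: "\<forall>a\<in>C. \<forall>b\<in>C. \<forall>c\<in>C. \<forall>X\<in>Ob D.
         Comp D (\<tau> b c (\<gamma>o a X)) (Comp D (\<gamma>m b (\<tau> a c X)) (\<tau> a b (\<gamma>o c X))) =
         Comp D (\<gamma>m c (\<tau> a b X)) (Comp D (\<tau> a c (\<gamma>o b X)) (\<gamma>m a (\<tau> b c X)))"
begin

lemma Fo_ob: "set l \<subseteq> C \<Longrightarrow> FoS Fnil \<gamma>o l \<in> Ob D"
  proof (induction l)
  case Nil then show ?case using fnil by simp
next
  case (Cons c l) then show ?case using ef_ob[OF bspec[OF endo, of c]] by simp
qed

lemma tau_hom: "a \<in> C \<Longrightarrow> b \<in> C \<Longrightarrow> X \<in> Ob D \<Longrightarrow> \<tau> a b X \<in> hom D (\<gamma>o a (\<gamma>o b X)) (\<gamma>o b (\<gamma>o a X))"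
  using nat by (auto simp: is_nat_iso_endo_def)

lemma tau_nat: "a \<in> C \<Longrightarrow> b \<in> C \<Longrightarrow> f \<in> hom D X Y \<Longrightarrow>
  Comp D (\<tau> a b Y) (\<gamma>m a (\<gamma>m b f)) = Comp D (\<gamma>m b (\<gamma>m a f)) (\<tau> a b X)"
  using nat by (auto simp: is_nat_iso_endo_def hom_def)

lemma Fm_hom: "mwt C f l l' \<Longrightarrow> FmS D Fnil \<gamma>o \<gamma>m \<tau> f \<in> hom D (FoS Fnil \<gamma>o l) (FoS Fnil \<gamma>o l')"
proof (induction rule: mwt.induct)
  case (wt_id l) then show ?case by (simp add: cat_ident cat Fo_ob)
next
  case (wt_sw a b l) then show ?case by (simp add: tau_hom Fo_ob)
next
  case (wt_cons x f l l') then show ?case using endo by (simp add: ef_hom)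
next
  case (wt_comp f l1 l2 g l3) then show ?case by (simp add: cat_comp cat)
qed

lemma Fm_meq: "meq C f g \<Longrightarrow> FmS D Fnil \<gamma>o \<gamma>m \<tau> f = FmS D Fnil \<gamma>o \<gamma>m \<tau> g"
proof (induction rule: meq.induct)
  case (eq_idl f l l') then show ?case using Fm_hom cat_idl cat by fastforce
next
  case (eq_idr f l l') then show ?case using Fm_hom cat_idr cat by fastforce
next
  case (eq_assoc f l1 l2 g l3 h l4) then show ?case using Fm_hom cat_assoc cat by fastforce
next
  case (eq_cons_id x l) then show ?case using endo Fo_ob by (simp add: ef_id)
next
  case (eq_cons_comp x f l1 l2 g l3) then show ?case by (simp add: ef_comp[OF bspec[OF endo eq_cons_comp(1)] Fm_hom[OF eq_cons_comp(2)] Fm_hom[OF eq_cons_comp(3)]])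
next
  case (eq_sw_nat a b f l l') then show ?case using Fm_hom by (simp add: tau_nat)
next
  case (eq_sw_inv a b l) then show ?case using inv Fo_ob by simp
next
  case (eq_ybe a b c l) then show ?case using ybe Fo_ob by simp
qed auto

lemma partI: "\<exists>(Fo :: 'c list \<Rightarrow> 'o) (Fm :: 'c mterm \<Rightarrow> 'm) (\<upsilon>nil :: 'm) (\<upsilon>cons :: 'c \<Rightarrow> 'c list \<Rightarrow> 'm).
         is_slist_functor C D Fo Fm \<and>
         \<upsilon>nil \<in> hom D (Fo []) Fnil \<and> is_iso D \<upsilon>nil \<and>
         (\<forall>c\<in>C. (\<forall>l. set l \<subseteq> C \<longrightarrow>
                     \<upsilon>cons c l \<in> hom D (Fo (c # l)) (\<gamma>o c (Fo l)) \<and> is_iso D (\<upsilon>cons c l)) \<and>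
                 (\<forall>f l l'. mwt C f l l' \<longrightarrow>
                     Comp D (\<upsilon>cons c l') (Fm (MCons c f)) = Comp D (\<gamma>m c (Fm f)) (\<upsilon>cons c l))) \<and>
         (\<forall>a\<in>C. \<forall>b\<in>C. \<forall>l. set l \<subseteq> C \<longrightarrow>
            Comp D (\<gamma>m b (\<upsilon>cons a l)) (Comp D (\<upsilon>cons b (a # l)) (Fm (MSw a b l))) =
            Comp D (\<tau> a b (Fo l)) (Comp D (\<gamma>m a (\<upsilon>cons b l)) (\<upsilon>cons a (b # l))))"
proof (intro exI conjI)
  let ?Fo = "FoS Fnil \<gamma>o" and ?Fm = "FmS D Fnil \<gamma>o \<gamma>m \<tau>"
  show "is_slist_functor C D ?Fo ?Fm"
    unfolding is_slist_functor_def
  proof (intro conjI allI impI)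
    fix l :: "'c list" assume "set l \<subseteq> C" then show "?Fo l \<in> Ob D" by (rule Fo_ob)
  next
    fix f l l' assume "mwt C f l l'" then show "?Fm f \<in> hom D (?Fo l) (?Fo l')" by (rule Fm_hom)
  next
    fix f g assume "meq C f g" then show "?Fm f = ?Fm g" by (rule Fm_meq)
  qed simp_all
  show "Ident D Fnil \<in> hom D (?Fo []) Fnil" by (simp add: cat cat_ident fnil)
  show "is_iso D (Ident D Fnil)" by (simp add: cat ident_iso fnil)
  show "\<forall>c\<in>C. (\<forall>l. set l \<subseteq> C \<longrightarrow>
                     (\<lambda>c l. Ident D (?Fo (c # l))) c l \<in> hom D (?Fo (c # l)) (\<gamma>o c (?Fo l)) \<and> is_iso D ((\<lambda>c l. Ident D (?Fo (c # l))) c l)) \<and>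
                 (\<forall>f l l'. mwt C f l l' \<longrightarrow>
                     Comp D ((\<lambda>c l. Ident D (?Fo (c # l))) c l') (?Fm (MCons c f)) = Comp D (\<gamma>m c (?Fm f)) ((\<lambda>c l. Ident D (?Fo (c # l))) c l))"
  proof (intro ballI conjI allI impI)
    fix c l assume c: "c \<in> C" and l: "set l \<subseteq> C"
    then have "?Fo (c # l) \<in> Ob D" by (intro Fo_ob) auto
    then show "Ident D (?Fo (c # l)) \<in> hom D (?Fo (c # l)) (\<gamma>o c (?Fo l))"
      "is_iso D (Ident D (?Fo (c # l)))" by (auto simp: cat cat_ident ident_iso)
  next
    fix c f l l' assume c: "c \<in> C" and w: "mwt C f l l'"
    have h: "\<gamma>m c (?Fm f) \<in> hom D (?Fo (c # l)) (?Fo (c # l'))"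
      using ef_hom[OF bspec[OF endo c] Fm_hom[OF w]] by simp
    show "Comp D (Ident D (?Fo (c # l'))) (?Fm (MCons c f)) = Comp D (\<gamma>m c (?Fm f)) (Ident D (?Fo (c # l)))"
      using cat_idl[OF cat h] cat_idr[OF cat h] by simp
  qed
  show "\<forall>a\<in>C. \<forall>b\<in>C. \<forall>l. set l \<subseteq> C \<longrightarrow>
            Comp D (\<gamma>m b ((\<lambda>c l. Ident D (?Fo (c # l))) a l)) (Comp D ((\<lambda>c l. Ident D (?Fo (c # l))) b (a # l)) (?Fm (MSw a b l))) =
            Comp D (\<tau> a b (?Fo l)) (Comp D (\<gamma>m a ((\<lambda>c l. Ident D (?Fo (c # l))) b l)) ((\<lambda>c l. Ident D (?Fo (c # l))) a (b # l)))"
  proof (intro ballI allI impI)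
    fix a b l assume a: "a \<in> C" and b: "b \<in> C" and l: "set l \<subseteq> C"
    let ?X = "?Fo l"
    have X: "?X \<in> Ob D" using l by (rule Fo_ob)
    have Xa: "\<gamma>o a ?X \<in> Ob D" "\<gamma>o b ?X \<in> Ob D"
      using ef_ob[OF bspec[OF endo a] X] ef_ob[OF bspec[OF endo b] X] by simp_all
    have t: "\<tau> a b ?X \<in> hom D (\<gamma>o a (\<gamma>o b ?X)) (\<gamma>o b (\<gamma>o a ?X))" using a b X by (rule tau_hom)
    show "Comp D (\<gamma>m b ((\<lambda>c l. Ident D (?Fo (c # l))) a l)) (Comp D ((\<lambda>c l. Ident D (?Fo (c # l))) b (a # l)) (?Fm (MSw a b l))) =
            Comp D (\<tau> a b (?Fo l)) (Comp D (\<gamma>m a ((\<lambda>c l. Ident D (?Fo (c # l))) b l)) ((\<lambda>c l. Ident D (?Fo (c # l))) a (b # l)))"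
      using ef_id[OF bspec[OF endo b] Xa(1)] ef_id[OF bspec[OF endo a] Xa(2)]
        cat_idl[OF cat t] cat_idr[OF cat t] cat_idl[OF cat cat_ident[OF cat ef_ob[OF bspec[OF endo a] Xa(2)]]]
      by (simp only: FoS.simps FmS.simps)
  qed
qed

end

fun phiS :: "'m \<Rightarrow> ('c \<Rightarrow> 'c list \<Rightarrow> 'm \<Rightarrow> 'm) \<Rightarrow> 'c list \<Rightarrow> 'm" where
  "phiS \<phi>nil \<phi>c [] = \<phi>nil"
| "phiS \<phi>nil \<phi>c (c # l) = \<phi>c c l (phiS \<phi>nil \<phi>c l)"

lemma partII:
  assumes cat: "is_category D" and F: "is_slist_functor C D Fo Fm" and G: "is_slist_functor C D Go Gm"
  and pn: "\<phi>nil \<in> hom D (Fo []) (Go [])"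
  and pc: "\<forall>c\<in>C. \<forall>l ind. set l \<subseteq> C \<longrightarrow> ind \<in> hom D (Fo l) (Go l) \<longrightarrow>
          \<phi>c c l ind \<in> hom D (Fo (c # l)) (Go (c # l))"
  and psw: "\<forall>a\<in>C. \<forall>b\<in>C. \<forall>l ind. set l \<subseteq> C \<longrightarrow> ind \<in> hom D (Fo l) (Go l) \<longrightarrow>
          Comp D (Gm (MSw a b l)) (\<phi>c a (b # l) (\<phi>c b l ind)) =
          Comp D (\<phi>c b (a # l) (\<phi>c a l ind)) (Fm (MSw a b l))"
  and pcons: "\<forall>c\<in>C. \<forall>f l l' ind ind'. mwt C f l l' \<longrightarrow>
          ind \<in> hom D (Fo l) (Go l) \<longrightarrow> ind' \<in> hom D (Fo l') (Go l') \<longrightarrow>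
          Comp D ind' (Fm f) = Comp D (Gm f) ind \<longrightarrow>
          Comp D (\<phi>c c l' ind') (Fm (MCons c f)) = Comp D (Gm (MCons c f)) (\<phi>c c l ind)"
  shows "\<exists>\<phi>. is_slist_nat_trans C D Fo Fm Go Gm \<phi> \<and> \<phi> [] = \<phi>nil \<and>
            (\<forall>c\<in>C. \<forall>l. set l \<subseteq> C \<longrightarrow> \<phi> (c # l) = \<phi>c c l (\<phi> l)) \<and>
            (\<forall>\<psi>. is_slist_nat_trans C D Fo Fm Go Gm \<psi> \<and> \<psi> [] = \<phi>nil \<and>
                 (\<forall>c\<in>C. \<forall>l. set l \<subseteq> C \<longrightarrow> \<psi> (c # l) = \<phi>c c l (\<psi> l)) \<longrightarrow>
                 (\<forall>l. set l \<subseteq> C \<longrightarrow> \<psi> l = \<phi> l))"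
proof (intro exI conjI)
  let ?p = "phiS \<phi>nil \<phi>c"
  have ph: "set l \<subseteq> C \<Longrightarrow> ?p l \<in> hom D (Fo l) (Go l)" for l
    by (induction l) (auto simp: pn pc)
  have Fh: "mwt C f l l' \<Longrightarrow> Fm f \<in> hom D (Fo l) (Fo l')" for f l l'
    using F by (simp add: is_slist_functor_def)
  have Gh: "mwt C f l l' \<Longrightarrow> Gm f \<in> hom D (Go l) (Go l')" for f l l'
    using G by (simp add: is_slist_functor_def)
  have Fc: "mwt C f l1 l2 \<Longrightarrow> mwt C g l2 l3 \<Longrightarrow> Fm (MComp g f) = Comp D (Fm g) (Fm f)" for f g l1 l2 l3
    using F unfolding is_slist_functor_def by blast
  have Gc: "mwt C f l1 l2 \<Longrightarrow> mwt C g l2 l3 \<Longrightarrow> Gm (MComp g f) = Comp D (Gm g) (Gm f)" for f g l1 l2 l3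
    using G unfolding is_slist_functor_def by blast
  have nat: "mwt C f l l' \<Longrightarrow> Comp D (?p l') (Fm f) = Comp D (Gm f) (?p l)" for f l l'
  proof (induction rule: mwt.induct)
    case (wt_id l)
    have e: "Fm (MId l) = Ident D (Fo l)" "Gm (MId l) = Ident D (Go l)"
      using F G wt_id by (simp_all add: is_slist_functor_def)
    show ?case unfolding e using cat_idl[OF cat ph[OF wt_id]] cat_idr[OF cat ph[OF wt_id]] by simp
  next
    case (wt_sw a b l)
    show ?case using psw[rule_format, OF wt_sw(1,2,3) ph[OF wt_sw(3)]] by simp
  next
    case (wt_cons x f l l')
    have s: "set l \<subseteq> C" "set l' \<subseteq> C" using wt_cons(2) mwt_set by blast+
    show ?case using pcons[rule_format, OF wt_cons(1,2) ph[OF s(1)] ph[OF s(2)] wt_cons.IH] by simp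
  next
    case (wt_comp f l1 l2 g l3)
    have s: "set l1 \<subseteq> C" "set l2 \<subseteq> C" "set l3 \<subseteq> C" using wt_comp mwt_set by blast+
    have "Comp D (?p l3) (Fm (MComp g f)) = Comp D (?p l3) (Comp D (Fm g) (Fm f))"
      using Fc[OF wt_comp(1,2)] by simp
    also have "\<dots> = Comp D (Comp D (?p l3) (Fm g)) (Fm f)"
      using cat_assoc[OF cat Fh[OF wt_comp(1)] Fh[OF wt_comp(2)] ph[OF s(3)]] .
    also have "\<dots> = Comp D (Comp D (Gm g) (?p l2)) (Fm f)" using wt_comp by simp
    also have "\<dots> = Comp D (Gm g) (Comp D (?p l2) (Fm f))"
      using cat_assoc[OF cat Fh[OF wt_comp(1)] ph[OF s(2)] Gh[OF wt_comp(2)]] by simp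
    also have "\<dots> = Comp D (Gm g) (Comp D (Gm f) (?p l1))" using wt_comp by simp
    also have "\<dots> = Comp D (Comp D (Gm g) (Gm f)) (?p l1)"
      using cat_assoc[OF cat ph[OF s(1)] Gh[OF wt_comp(1)] Gh[OF wt_comp(2)]] .
    also have "\<dots> = Comp D (Gm (MComp g f)) (?p l1)"
      using Gc[OF wt_comp(1,2)] by simp
    finally show ?case .
  qed
  show "is_slist_nat_trans C D Fo Fm Go Gm ?p"
    unfolding is_slist_nat_trans_def using ph nat by blast
  show "?p [] = \<phi>nil" by simp
  show "\<forall>c\<in>C. \<forall>l. set l \<subseteq> C \<longrightarrow> ?p (c # l) = \<phi>c c l (?p l)" by simp
  show "\<forall>\<psi>. is_slist_nat_trans C D Fo Fm Go Gm \<psi> \<and> \<psi> [] = \<phi>nil \<and>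
                 (\<forall>c\<in>C. \<forall>l. set l \<subseteq> C \<longrightarrow> \<psi> (c # l) = \<phi>c c l (\<psi> l)) \<longrightarrow>
                 (\<forall>l. set l \<subseteq> C \<longrightarrow> \<psi> l = ?p l)"
  proof (intro allI impI)
    fix \<psi> l assume h: "is_slist_nat_trans C D Fo Fm Go Gm \<psi> \<and> \<psi> [] = \<phi>nil \<and>
                 (\<forall>c\<in>C. \<forall>l. set l \<subseteq> C \<longrightarrow> \<psi> (c # l) = \<phi>c c l (\<psi> l))" and l: "set l \<subseteq> C"
    have h0: "\<psi> [] = \<phi>nil" using h by blast
    have h1: "\<And>c l. c \<in> C \<Longrightarrow> set l \<subseteq> C \<Longrightarrow> \<psi> (c # l) = \<phi>c c l (\<psi> l)" using h by blast
    from l show "\<psi> l = ?p l"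
    proof (induction l)
      case Nil then show ?case using h0 by simp
    next
      case (Cons c l) then show ?case using h1[of c l] by simp
    qed
  qed
qed


theorem lemma2p3:
  fixes C :: "'c set" and D :: "('o, 'm) category"
  assumes "is_category D"
  shows
   "(\<forall>(Fnil :: 'o) (\<gamma>o :: 'c \<Rightarrow> 'o \<Rightarrow> 'o) (\<gamma>m :: 'c \<Rightarrow> 'm \<Rightarrow> 'm) (\<tau> :: 'c \<Rightarrow> 'c \<Rightarrow> 'o \<Rightarrow> 'm).
      Fnil \<in> Ob D \<longrightarrow>
      (\<forall>c\<in>C. is_endofunctor D (\<gamma>o c) (\<gamma>m c)) \<longrightarrow>
      (\<forall>a\<in>C. \<forall>b\<in>C. is_nat_iso_endo D (\<gamma>o a \<circ> \<gamma>o b) (\<gamma>m a \<circ> \<gamma>m b)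
                                     (\<gamma>o b \<circ> \<gamma>o a) (\<gamma>m b \<circ> \<gamma>m a) (\<tau> a b)) \<longrightarrow>
      (\<forall>a\<in>C. \<forall>b\<in>C. \<forall>X\<in>Ob D. Comp D (\<tau> a b X) (\<tau> b a X) = Ident D (\<gamma>o b (\<gamma>o a X))) \<longrightarrow>
      (\<forall>a\<in>C. \<forall>b\<in>C. \<forall>c\<in>C. \<forall>X\<in>Ob D.
         Comp D (\<tau> b c (\<gamma>o a X)) (Comp D (\<gamma>m b (\<tau> a c X)) (\<tau> a b (\<gamma>o c X))) =
         Comp D (\<gamma>m c (\<tau> a b X)) (Comp D (\<tau> a c (\<gamma>o b X)) (\<gamma>m a (\<tau> b c X)))) \<longrightarrow>
      (\<exists>(Fo :: 'c list \<Rightarrow> 'o) (Fm :: 'c mterm \<Rightarrow> 'm) (\<upsilon>nil :: 'm) (\<upsilon>cons :: 'c \<Rightarrow> 'c list \<Rightarrow> 'm).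
         is_slist_functor C D Fo Fm \<and>
         \<upsilon>nil \<in> hom D (Fo []) Fnil \<and> is_iso D \<upsilon>nil \<and>
         (\<forall>c\<in>C. (\<forall>l. set l \<subseteq> C \<longrightarrow>
                     \<upsilon>cons c l \<in> hom D (Fo (c # l)) (\<gamma>o c (Fo l)) \<and> is_iso D (\<upsilon>cons c l)) \<and>
                 (\<forall>f l l'. mwt C f l l' \<longrightarrow>
                     Comp D (\<upsilon>cons c l') (Fm (MCons c f)) = Comp D (\<gamma>m c (Fm f)) (\<upsilon>cons c l))) \<and>
         (\<forall>a\<in>C. \<forall>b\<in>C. \<forall>l. set l \<subseteq> C \<longrightarrow>
            Comp D (\<gamma>m b (\<upsilon>cons a l)) (Comp D (\<upsilon>cons b (a # l)) (Fm (MSw a b l))) =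
            Comp D (\<tau> a b (Fo l)) (Comp D (\<gamma>m a (\<upsilon>cons b l)) (\<upsilon>cons a (b # l))))))
   \<and>
   (\<forall>(Fo :: 'c list \<Rightarrow> 'o) (Fm :: 'c mterm \<Rightarrow> 'm) (Go :: 'c list \<Rightarrow> 'o) (Gm :: 'c mterm \<Rightarrow> 'm)
      (\<phi>nil :: 'm) (\<phi>c :: 'c \<Rightarrow> 'c list \<Rightarrow> 'm \<Rightarrow> 'm).
      is_slist_functor C D Fo Fm \<longrightarrow> is_slist_functor C D Go Gm \<longrightarrow>
      \<phi>nil \<in> hom D (Fo []) (Go []) \<longrightarrow>
      (\<forall>c\<in>C. \<forall>l ind. set l \<subseteq> C \<longrightarrow> ind \<in> hom D (Fo l) (Go l) \<longrightarrow>
          \<phi>c c l ind \<in> hom D (Fo (c # l)) (Go (c # l))) \<longrightarrow>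
      (\<forall>a\<in>C. \<forall>b\<in>C. \<forall>l ind. set l \<subseteq> C \<longrightarrow> ind \<in> hom D (Fo l) (Go l) \<longrightarrow>
          Comp D (Gm (MSw a b l)) (\<phi>c a (b # l) (\<phi>c b l ind)) =
          Comp D (\<phi>c b (a # l) (\<phi>c a l ind)) (Fm (MSw a b l))) \<longrightarrow>
      (\<forall>c\<in>C. \<forall>f l l' ind ind'. mwt C f l l' \<longrightarrow>
          ind \<in> hom D (Fo l) (Go l) \<longrightarrow> ind' \<in> hom D (Fo l') (Go l') \<longrightarrow>
          Comp D ind' (Fm f) = Comp D (Gm f) ind \<longrightarrow>
          Comp D (\<phi>c c l' ind') (Fm (MCons c f)) = Comp D (Gm (MCons c f)) (\<phi>c c l ind)) \<longrightarrow>
      (\<exists>\<phi>. is_slist_nat_trans C D Fo Fm Go Gm \<phi> \<and> \<phi> [] = \<phi>nil \<and>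
            (\<forall>c\<in>C. \<forall>l. set l \<subseteq> C \<longrightarrow> \<phi> (c # l) = \<phi>c c l (\<phi> l)) \<and>
            (\<forall>\<psi>. is_slist_nat_trans C D Fo Fm Go Gm \<psi> \<and> \<psi> [] = \<phi>nil \<and>
                 (\<forall>c\<in>C. \<forall>l. set l \<subseteq> C \<longrightarrow> \<psi> (c # l) = \<phi>c c l (\<psi> l)) \<longrightarrow>
                 (\<forall>l. set l \<subseteq> C \<longrightarrow> \<psi> l = \<phi> l))))"
  apply (intro conjI allI impI)
   apply (rule partI[OF assms]; assumption)
  apply (rule partII[OF assms]; assumption)
  done

end
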